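(* Every deterministic mechanism for locating one facility on $[0,1]$ that is anonymous, Pareto efficient and strategy proof has approximation ratio at least $\frac{3}{2\sqrt2}$ for the Nash welfare.
   Context: Agents $1,\dots,n$ report locations $x_1,\dots,x_n\in[0,1]$; a deterministic mechanism $f$ maps each profile (for each $n$) to a facility location $y=f(x_1,\dots,x_n)\in[0,1]$. Agent $i$'s utility is $u_i=1-|x_i-y|$; the Nash welfare is $\left(\prod_i u_i\right)^{1/n}$. $f$ is anonymous if permuting the reports does not change the output; Pareto efficient if for no profile is there a location $z$ with $|x_j-z|\le|x_j-f(x)|$ for all $j$ and strict inequality for some $i$; strategy proof if no agent $i$ can report some $x_i'$ and obtain $|x_i-f(x_1,\dots,x_i',\dots,x_n)|<|x_i-f(x)|$. The approximation ratio of $f$ for the Nash welfare is the supremum over all profiles $x$ of $\mathrm{OPT}(x)/\mathrm{NW}(f(x))$, where $\mathrm{OPT}(x)$ is the maximum Nash welfare over facility locations in $[0,1]$. *)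

theory Defs
  imports "HOL-Analysis.Analysis" "HOL-Library.Multiset"
begin

definition valid_profile :: "real list \<Rightarrow> bool" where
  "valid_profile xs \<longleftrightarrow> xs \<noteq> [] \<and> set xs \<subseteq> {0..1}"

definition utility :: "real \<Rightarrow> real \<Rightarrow> real" where
  "utility x y = 1 - \<bar>x - y\<bar>"

definition nash_welfare :: "real list \<Rightarrow> real \<Rightarrow> real" where
  "nash_welfare xs y = root (length xs) (\<Prod>i<length xs. utility (xs ! i) y)"

definition opt_nw :: "real list \<Rightarrow> real" where
  "opt_nw xs = (SUP y\<in>{0..1}. nash_welfare xs y)"

definition mechanism :: "(real list \<Rightarrow> real) \<Rightarrow> bool" where
  "mechanism f \<longleftrightarrow> (\<forall>xs. valid_profile xs \<longrightarrow> f xs \<in> {0..1})"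

definition anonymous :: "(real list \<Rightarrow> real) \<Rightarrow> bool" where
  "anonymous f \<longleftrightarrow> (\<forall>xs ys. valid_profile xs \<longrightarrow> mset xs = mset ys \<longrightarrow> f xs = f ys)"

definition pareto_efficient :: "(real list \<Rightarrow> real) \<Rightarrow> bool" where
  "pareto_efficient f \<longleftrightarrow> (\<forall>xs. valid_profile xs \<longrightarrow>
     \<not> (\<exists>z\<in>{0..1}. (\<forall>j<length xs. \<bar>xs ! j - z\<bar> \<le> \<bar>xs ! j - f xs\<bar>) \<and>
                       (\<exists>i<length xs. \<bar>xs ! i - z\<bar> < \<bar>xs ! i - f xs\<bar>)))"

definition strategy_proof :: "(real list \<Rightarrow> real) \<Rightarrow> bool" where
  "strategy_proof f \<longleftrightarrow> (\<forall>xs i x'. valid_profile xs \<longrightarrow> i < length xs \<longrightarrow> x' \<in> {0..1} \<longrightarrow>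
     \<not> (\<bar>xs ! i - f (xs[i := x'])\<bar> < \<bar>xs ! i - f xs\<bar>))"

text \<open>Approximation ratio: supremum over all profiles of OPT/NW, in the extended reals
(a profile with NW = 0 contributes +\<infinity>, since OPT > 0).\<close>
definition approx_ratio :: "(real list \<Rightarrow> real) \<Rightarrow> ereal" where
  "approx_ratio f = (SUP xs\<in>{xs. valid_profile xs}. ereal (opt_nw xs) / ereal (nash_welfare xs (f xs)))"

end

theory Submission
  imports Defs
begin

lemma nw2: "nash_welfare [a, b] y = sqrt (utility a y * utility b y)"
  unfolding nash_welfare_def sqrt_def by (simp add: numeral_2_eq_2 lessThan_Suc)

lemma nw_le1:
  assumes "set xs \<subseteq> {0..1}" "y \<in> {0..1}"
  shows "nash_welfare xs y \<le> 1"
proof -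
  have "(\<Prod>i<length xs. utility (xs ! i) y) \<le> 1"
  proof (rule prod_le_1)
    fix i assume "i \<in> {..<length xs}"
    then have "xs ! i \<in> {0..1}" by (meson assms(1) nth_mem subsetD lessThan_iff)
    then show "0 \<le> utility (xs ! i) y \<and> utility (xs ! i) y \<le> 1"
      using assms(2) unfolding utility_def by auto
  qed
  then show ?thesis unfolding nash_welfare_def
    by (cases "length xs") auto
qed

lemma opt_ge:
  assumes "set xs \<subseteq> {0..1}" "y \<in> {0..1}"
  shows "nash_welfare xs y \<le> opt_nw xs"
  unfolding opt_nw_def
  by (rule cSUP_upper[OF assms(2)]) (use nw_le1[OF assms(1)] in \<open>auto simp: bdd_above_def intro!: exI[of _ 1]\<close>)

lemma key_ineq:
  fixes q ov :: real
  assumes "0 \<le> q" "q \<le> 1/2" "(1 + q) / 2 \<le> ov"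
  shows "ereal ov / ereal (sqrt q) \<ge> ereal (3 / (2 * sqrt 2))"
proof (cases "q = 0")
  case True
  then have "ov > 0" using assms by simp
  then show ?thesis using True by simp
next
  case False
  then have qp: "q > 0" using assms by simp
  have "3 * sqrt q \<le> sqrt 2 * (1 + q)"
  proof -
    have e1: "(3 * sqrt q)^2 = 9 * q" using qp by (simp add: power_mult_distrib)
    have e2: "(sqrt 2 * (1 + q))^2 = 2 * (1 + q)^2" by (simp add: power_mult_distrib)
    have "0 \<le> (1 - 2 * q) * (2 - q)" using assms by simp
    then have "(3 * sqrt q)^2 \<le> (sqrt 2 * (1 + q))^2"
      unfolding e1 e2 by (simp add: power2_eq_square algebra_simps)
    then show ?thesis
      by (rule power2_le_imp_le) (use qp in simp)
  qed
  then have "3 / (2 * sqrt 2) \<le> ((1 + q) / 2) / sqrt q"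
    using qp by (simp add: field_simps)
  also have "... \<le> ov / sqrt q" using qp assms(3) by (intro divide_right_mono) auto
  finally show ?thesis using qp by simp
qed

theorem theorem12:
  fixes f :: "real list \<Rightarrow> real"
  assumes "mechanism f" and "anonymous f" and "pareto_efficient f" and "strategy_proof f"
  shows "approx_ratio f \<ge> ereal (3 / (2 * sqrt 2))"
proof -
  define p where "p = f [0, 1]"
  have v01: "valid_profile [0, 1]" unfolding valid_profile_def by auto
  then have p01: "p \<in> {0..1}" using assms(1) unfolding mechanism_def p_def by blast
  have upper: "ereal (opt_nw xs) / ereal (nash_welfare xs (f xs)) \<le> approx_ratio f"
    if "valid_profile xs" for xs
    unfolding approx_ratio_def by (rule SUP_upper) (use that in simp)
  show ?thesis
  proof (cases "p \<le> 1/2")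
    case True
    have v: "valid_profile [p, 1]" using p01 unfolding valid_profile_def by auto
    have "\<not> (\<bar>[p, 1] ! 0 - f ([p, 1][0 := 0])\<bar> < \<bar>[p, 1] ! 0 - f [p, 1]\<bar>)"
      using assms(4) v unfolding strategy_proof_def by force
    then have fp: "f [p, 1] = p" by (simp add: p_def[symmetric])
    have nw: "nash_welfare [p, 1] (f [p, 1]) = sqrt p"
      using fp p01 by (simp add: nw2 utility_def)
    have u1: "utility p ((1 + p) / 2) = (1 + p) / 2" "utility 1 ((1 + p) / 2) = (1 + p) / 2"
      using p01 unfolding utility_def by (auto simp: abs_if field_simps)
    have "nash_welfare [p, 1] ((1 + p) / 2) = (1 + p) / 2"
      by (simp only: nw2 u1 real_sqrt_abs2) (use p01 in simp)
    then have "(1 + p) / 2 \<le> opt_nw [p, 1]"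
      using opt_ge[of "[p, 1]" "(1 + p) / 2"] p01 by auto
    then show ?thesis using key_ineq[of p "opt_nw [p, 1]"] True p01 upper[OF v] nw by (metis atLeastAtMost_iff order_trans)
  next
    case False
    have v: "valid_profile [0, p]" using p01 unfolding valid_profile_def by auto
    have "\<not> (\<bar>[0, p] ! 1 - f ([0, p][1 := 1])\<bar> < \<bar>[0, p] ! 1 - f [0, p]\<bar>)"
      using assms(4) v unfolding strategy_proof_def by force
    then have fp: "f [0, p] = p" by (simp add: p_def[symmetric])
    have nw: "nash_welfare [0, p] (f [0, p]) = sqrt (1 - p)"
      using fp p01 by (simp add: nw2 utility_def)
    have u1: "utility 0 (p / 2) = (1 + (1 - p)) / 2" "utility p (p / 2) = (1 + (1 - p)) / 2"
      using p01 unfolding utility_def by (auto simp: abs_if field_simps)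
    have "nash_welfare [0, p] (p / 2) = (1 + (1 - p)) / 2"
      by (simp only: nw2 u1 real_sqrt_abs2) (use p01 in simp)
    then have "(1 + (1 - p)) / 2 \<le> opt_nw [0, p]"
      using opt_ge[of "[0, p]" "p / 2"] p01 by auto
    moreover have "0 \<le> 1 - p" "1 - p \<le> 1/2" using False p01 by auto
    ultimately show ?thesis using key_ineq[of "1 - p" "opt_nw [0, p]"] upper[OF v] nw by (metis order_trans)
  qed
qed

end
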